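(* Let $\theta^*>0$, $\mathbf{P}=[-\theta^*,\theta^*]$, and let $g\colon\mathbf{P}\to\mathbb{R}$ be continuously differentiable with $g(\theta)\neq0$ and $g'(\theta)\neq0$ for all $\theta\in\mathbf{P}$ (so $g$ is zero-free and strictly monotone). Put $k^*:=\max_{\theta\in\mathbf{P}}\frac{2\theta}{g'(\theta)}$. Then for every real $k>k^*$ the pair $(A_k,b_g)$ given by $$A_k(\theta)=\begin{pmatrix}0&1\\ kg(\theta)-\theta^2&0\end{pmatrix},\qquad b_g(\theta)=\begin{pmatrix}0\\ g(\theta)\end{pmatrix},$$ i.e. the family of harmonic oscillators $\partial_t^2y(t,\theta)+\theta^2y(t,\theta)=g(\theta)\big(ky(t,\theta)+u(t)\big)$ written in first-order form $\partial_t x(t,\theta)=A_k(\theta)x(t,\theta)+b_g(\theta)u(t)$, is uniformly ensemble reachable over $\mathbf{P}$.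
   Context: For continuous $A\colon\mathbf{P}\to\mathbb{C}^{n\times n}$, $B\colon\mathbf{P}\to\mathbb{C}^{n\times m}$ on a compact parameter set $\mathbf{P}$, the pair $(A,B)$ is uniformly ensemble reachable (from zero) if for every continuous $f\colon\mathbf{P}\to\mathbb{C}^n$ and every $\varepsilon>0$ there exist $T>0$ and an input $u\in L^1([0,T],\mathbb{C}^m)$ (independent of $\theta$) such that $\sup_{\theta\in\mathbf{P}}\big\|\int_0^Te^{A(\theta)(T-s)}B(\theta)u(s)\,ds-f(\theta)\big\|<\varepsilon$. *)

theory Defs
  imports "HOL-Analysis.Analysis"
begin

fun mat_pow :: "'a::comm_ring_1^'n::finite^'n \<Rightarrow> nat \<Rightarrow> 'a^'n^'n" where
  "mat_pow M 0 = mat 1"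
| "mat_pow M (Suc k) = M ** mat_pow M k"

definition mat_exp :: "complex^'n::finite^'n \<Rightarrow> complex^'n^'n" where
  "mat_exp M = (\<Sum>k. (1 / fact k) *\<^sub>R mat_pow M k)"

text \<open>Uniform ensemble reachability (from zero) of a parameter-dependent pair (A,B)
  over the parameter set P.  The condition
  sup over P of the error being < eps is written as: some delta < eps bounds the error
  at every parameter.\<close>

definition uniformly_ensemble_reachable ::
  "real set \<Rightarrow> (real \<Rightarrow> complex^'n::finite^'n) \<Rightarrow> (real \<Rightarrow> complex^'m::finite^'n) \<Rightarrow> bool" where
  "uniformly_ensemble_reachable P A B \<longleftrightarrow>
     (\<forall>f :: real \<Rightarrow> complex^'n. continuous_on P f \<longrightarrow>
        (\<forall>\<epsilon>>0. \<exists>T>0. \<exists>u :: real \<Rightarrow> complex^'m.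
            set_integrable lborel {0..T} u \<and>
            (\<exists>\<delta><\<epsilon>. \<forall>\<theta>\<in>P.
               norm ((LINT s:{0..T}|lborel. mat_exp ((T - s) *\<^sub>R A \<theta>) *v (B \<theta> *v u s)) - f \<theta>) \<le> \<delta>)))"

definition A_osc :: "real \<Rightarrow> (real \<Rightarrow> real) \<Rightarrow> real \<Rightarrow> complex^2^2" where
  "A_osc k g \<theta> = vector [vector [0, 1], vector [complex_of_real (k * g \<theta> - \<theta>^2), 0]]"

definition b_osc :: "(real \<Rightarrow> real) \<Rightarrow> real \<Rightarrow> complex^1^2" where
  "b_osc g \<theta> = vector [vector [0], vector [complex_of_real (g \<theta>)]]"

end

theory Submission
  imports Defs "HOL-Computational_Algebra.Polynomial"
begin

typedef (overloaded) endo = "UNIV :: ((complex^2) \<Rightarrow>\<^sub>L (complex^2)) set"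
  morphisms Erep Eabs by simp

setup_lifting type_definition_endo

instantiation endo :: real_normed_vector
begin
lift_definition norm_endo :: "endo \<Rightarrow> real" is norm .
lift_definition minus_endo :: "endo \<Rightarrow> endo \<Rightarrow> endo" is "(-)" .
lift_definition plus_endo :: "endo \<Rightarrow> endo \<Rightarrow> endo" is "(+)" .
lift_definition uminus_endo :: "endo \<Rightarrow> endo" is "uminus" .
lift_definition zero_endo :: "endo" is "0" .
lift_definition scaleR_endo :: "real \<Rightarrow> endo \<Rightarrow> endo" is "scaleR" .
definition dist_endo :: "endo \<Rightarrow> endo \<Rightarrow> real" where "dist_endo a b = norm (a - b)"
definition sgn_endo :: "endo \<Rightarrow> endo" where "sgn_endo x = scaleR (inverse (norm x)) x"
definition uniformity_endo :: "(endo \<times> endo) filter" where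
  "uniformity_endo = (INF e\<in>{0 <..}. principal {(x, y). dist x y < e})"
definition open_endo :: "endo set \<Rightarrow> bool" where
  "open_endo S = (\<forall>x\<in>S. \<forall>\<^sub>F (x', y) in uniformity. x' = x \<longrightarrow> y \<in> S)"
instance
  apply standard
  unfolding dist_endo_def open_endo_def sgn_endo_def uniformity_endo_def
  apply (rule refl | (transfer, force simp: algebra_simps norm_triangle_ineq))+
  done
end

instantiation endo :: real_normed_algebra_1
begin
lift_definition times_endo :: "endo \<Rightarrow> endo \<Rightarrow> endo" is "(o\<^sub>L)" .
lift_definition one_endo :: "endo" is "id_blinfun" .
instance
  apply standard
  apply (transfer, ((rule blinfun_eqI, simp add: blinfun.bilinear_simps)
     | (metis norm_blinfun_id norm_zero zero_neq_one) | rule norm_blinfun_compose | simp))+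
  done
end

lemma Erep_dist: "dist (Erep x) (Erep y) = dist x y"
  by (simp add: dist_norm dist_endo_def norm_endo.rep_eq minus_endo.rep_eq)

instance endo :: banach
proof
  fix X :: "nat \<Rightarrow> endo" assume "Cauchy X"
  then have "Cauchy (\<lambda>n. Erep (X n))" unfolding Cauchy_def Erep_dist .
  then obtain L where "(\<lambda>n. Erep (X n)) \<longlonglongrightarrow> L" using Cauchy_convergent_iff convergent_def by blast
  then have "X \<longlonglongrightarrow> Eabs L"
    unfolding lim_sequentially by (metis Erep_dist Eabs_inverse UNIV_I)
  then show "convergent X" by (auto simp: convergent_def)
qed

definition app :: "endo \<Rightarrow> complex^2 \<Rightarrow> complex^2" where
  "app E x = blinfun_apply (Erep E) x"

lemma endo_eqI: "(\<And>x. app a x = app b x) \<Longrightarrow> a = b"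
  unfolding app_def by (metis Erep_inject blinfun_eqI)

lemma app_mult: "app (a * b) x = app a (app b x)"
  unfolding app_def by (simp add: times_endo.rep_eq)
lemma app_one: "app 1 x = x"
  unfolding app_def by (simp add: one_endo.rep_eq)
lemma app_add: "app (a + b) x = app a x + app b x"
  unfolding app_def by (simp add: plus_endo.rep_eq blinfun.bilinear_simps)
lemma app_diff: "app (a - b) x = app a x - app b x"
  unfolding app_def by (simp add: minus_endo.rep_eq blinfun.bilinear_simps)
lemma app_scaleR: "app (r *\<^sub>R a) x = r *\<^sub>R app a x"
  unfolding app_def by (simp add: scaleR_endo.rep_eq blinfun.bilinear_simps)
lemma app_norm: "norm (app a x) \<le> norm a * norm x"
  unfolding app_def by (simp add: norm_endo.rep_eq norm_blinfun)
lemma app_lin_add: "app a (x + y) = app a x + app a y"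
  unfolding app_def by (simp add: blinfun.bilinear_simps)
lemma app_lin_diff: "app a (x - y) = app a x - app a y"
  unfolding app_def by (simp add: blinfun.bilinear_simps)
lemma app_lin_scaleR: "app a (r *\<^sub>R x) = r *\<^sub>R app a x"
  unfolding app_def by (simp add: blinfun.bilinear_simps)
lemma bl_Erep: "bounded_linear Erep"
proof
  show "Erep (a + b) = Erep a + Erep b" for a b by (simp add: plus_endo.rep_eq)
  show "Erep (r *\<^sub>R b) = r *\<^sub>R Erep b" for r b by (simp add: scaleR_endo.rep_eq)
  show "\<exists>K. \<forall>x. norm (Erep x) \<le> norm x * K"
    by (rule exI[of _ 1]) (simp add: norm_endo.rep_eq)
qed

lemma bounded_linear_app: "bounded_linear (\<lambda>a. app a x)"
  unfolding app_def
  by (rule bounded_linear_compose[OF _ bl_Erep]) simp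

lemma mv_scaleR: "(M::complex^'n^'m) *v (r *\<^sub>R x) = r *\<^sub>R (M *v x)"
  unfolding vec_eq_iff matrix_vector_mult_def scaleR_vec_def
  by (simp add: scaleR_sum_right)

lemma mv_add_mat: "((A::complex^'n^'m) + B) *v x = A *v x + B *v x"
  unfolding vec_eq_iff matrix_vector_mult_def
  by (simp add: sum.distrib distrib_right)

lemma mv_scaleR_mat: "(r *\<^sub>R (A::complex^'n^'m)) *v x = r *\<^sub>R (A *v x)"
  unfolding vec_eq_iff matrix_vector_mult_def scaleR_vec_def
  by (simp add: scaleR_sum_right)

lemma bl_mv: "bounded_linear (\<lambda>x. (M::complex^2^2) *v x)"
proof -
  have "linear (\<lambda>x. (M::complex^2^2) *v x)"
    by (rule linearI) (simp_all add: matrix_vector_right_distrib mv_scaleR)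
  then show ?thesis by (simp add: linear_conv_bounded_linear)
qed

definition lin :: "complex^2^2 \<Rightarrow> endo" where
  "lin M = Eabs (Blinfun (\<lambda>x. M *v x))"

lemma app_lin: "app (lin M) x = M *v x"
  unfolding app_def lin_def by (simp add: Eabs_inverse bounded_linear_Blinfun_apply bl_mv)

lemma lin_mult: "lin (A ** B) = lin A * lin B"
  by (rule endo_eqI) (simp add: app_lin app_mult matrix_vector_mul_assoc)

lemma lin_one: "lin (mat 1) = 1"
  by (rule endo_eqI) (simp add: app_lin app_one)

lemma lin_pow: "lin (mat_pow M k) = lin M ^ k"
  by (induct k) (simp_all add: lin_one lin_mult)

lemma bl_lin: "bounded_linear lin"
proof -
  have "linear lin"
    by (rule linearI; rule endo_eqI) (simp_all add: app_lin app_add app_scaleR mv_add_mat mv_scaleR_mat)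
  then show ?thesis by (simp add: linear_conv_bounded_linear)
qed

lemma norm_le_l1_gen: "norm (x::'a::real_normed_vector^'n) \<le> (\<Sum>i\<in>UNIV. norm (x $ i))"
  by (simp add: norm_vec_def L2_set_le_sum)

lemma norm_axis_c: "norm (axis j (1::complex) :: complex^'n) = 1"
proof -
  have "axis j (1::complex) \<in> (Basis :: (complex^'n) set)" by (auto simp: Basis_vec_def)
  then show ?thesis by (rule norm_Basis)
qed

lemma mv_axis: "((X::complex^2^2) *v axis j 1) $ i = X $ i $ j"
  by (simp add: matrix_vector_mult_def axis_def if_distrib cong: if_cong)

lemma norm_mat_le: "norm (X::complex^2^2) \<le> 4 * norm (lin X)"
proof -
  have c: "norm (X $ i $ j) \<le> norm (lin X)" for i j
  proof -
    have "norm (X $ i $ j) = norm ((X *v axis j 1) $ i)" by (simp add: mv_axis)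
    also have "\<dots> \<le> norm (X *v axis j 1)" by (rule Finite_Cartesian_Product.norm_nth_le)
    also have "\<dots> = norm (app (lin X) (axis j 1))" by (simp add: app_lin)
    also have "\<dots> \<le> norm (lin X) * norm (axis j (1::complex))" by (rule app_norm)
    also have "\<dots> = norm (lin X)" by (simp add: norm_axis_c)
    finally show ?thesis .
  qed
  have "norm X \<le> (\<Sum>i\<in>UNIV. norm (X $ i))" by (rule norm_le_l1_gen)
  also have "\<dots> \<le> (\<Sum>i\<in>(UNIV::2 set). \<Sum>j\<in>(UNIV::2 set). norm (X $ i $ j))"
    by (intro sum_mono norm_le_l1_gen)
  also have "\<dots> \<le> (\<Sum>i\<in>(UNIV::2 set). \<Sum>j\<in>(UNIV::2 set). norm (lin X))"
    by (intro sum_mono c)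
  also have "\<dots> = 4 * norm (lin X)" by simp
  finally show ?thesis .
qed

lemma lin_mat_exp: "lin (mat_exp M) = exp (lin M)"
proof -
  let ?f = "\<lambda>k. (1 / fact k) *\<^sub>R mat_pow M k"
  interpret L: bounded_linear lin by (rule bl_lin)
  have lf: "lin (?f k) = (lin M)^k /\<^sub>R fact k" for k
    unfolding L.scaleR lin_pow by (simp add: divide_inverse)
  let ?g = "\<lambda>k. 4 * (norm (lin M)^k /\<^sub>R fact k)"
  have sg: "summable ?g"
    by (intro summable_mult summable_exp_generic)
  have b: "norm (?f k) \<le> ?g k" for k
  proof -
    have "norm (?f k) \<le> 4 * norm (lin (?f k))" by (rule norm_mat_le)
    also have "norm (lin (?f k)) \<le> norm (lin M)^k /\<^sub>R fact k"
      unfolding lf norm_scaleR using norm_power_ineq[of "lin M" k]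
      by (simp add: divide_right_mono)
    finally show ?thesis by simp
  qed
  have s: "summable ?f"
    by (rule summable_comparison_test'[OF sg b])
  have "lin (mat_exp M) = (\<Sum>k. lin (?f k))"
    unfolding mat_exp_def using L.suminf[OF s] by simp
  also have "\<dots> = exp (lin M)" unfolding lf exp_def ..
  finally show ?thesis .
qed

lemma mat_exp_app: "mat_exp M *v x = app (exp (lin M)) x"
  by (metis app_lin lin_mat_exp)

lemma norm_sums_le:
  fixes f :: "nat \<Rightarrow> 'a::banach"
  assumes s: "f sums S" and b: "\<And>n. norm (f n) \<le> c * (r^n / fact n)" and r: "0 \<le> r"
  shows "norm S \<le> c * exp r"
proof -
  have g: "(\<lambda>n. c * (r^n / fact n)) sums (c * exp r)"
    using exp_converges[of r] by (intro sums_mult) (simp add: divide_inverse mult.commute)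
  have sn: "summable (\<lambda>n. norm (f n))"
    by (rule summable_comparison_test'[OF sums_summable[OF g]]) (use b in auto)
  have "norm S = norm (suminf f)" using s by (simp add: sums_iff)
  also have "\<dots> \<le> (\<Sum>n. norm (f n))" by (rule summable_norm[OF sn])
  also have "\<dots> \<le> (\<Sum>n. c * (r^n / fact n))"
    by (rule suminf_le[OF b sn sums_summable[OF g]])
  also have "\<dots> = c * exp r" using g by (simp add: sums_iff)
  finally show ?thesis .
qed

lemma norm_pow_fact:
  fixes X :: "'a::{real_normed_algebra_1,banach}"
  shows "norm (X^m /\<^sub>R fact m) \<le> norm X ^ m / fact m"
proof -
  have "norm (X^m /\<^sub>R fact m) = norm (X^m) / fact m" by (simp add: divide_inverse_commute)
  also have "\<dots> \<le> norm X ^ m / fact m" by (intro divide_right_mono norm_power_ineq) simp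
  finally show ?thesis .
qed

lemma exp_minus_one_bound:
  fixes X :: "'a::{real_normed_algebra_1,banach}"
  shows "norm (exp X - 1) \<le> norm X * exp (norm X)"
proof -
  have "(\<lambda>n. X^(Suc n) /\<^sub>R fact (Suc n)) sums (exp X - 1)"
    using exp_converges[of X] by (subst sums_Suc_iff) simp
  moreover have "norm (X^(Suc n) /\<^sub>R fact (Suc n)) \<le> norm X * (norm X^n / fact n)" for n
  proof -
    have "norm (X^(Suc n) /\<^sub>R fact (Suc n)) \<le> norm X^(Suc n) / fact (Suc n)"
      by (rule norm_pow_fact)
    also have "\<dots> \<le> norm X^(Suc n) / fact n"
      by (rule divide_left_mono[OF fact_mono]) auto
    also have "\<dots> = norm X * (norm X^n / fact n)" by simp
    finally show ?thesis .
  qed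
  ultimately show ?thesis by (rule norm_sums_le) simp
qed

lemma exp_minus_one_lin_bound:
  fixes X :: "'a::{real_normed_algebra_1,banach}"
  shows "norm (exp X - 1 - X) \<le> (norm X)^2 * exp (norm X)"
proof -
  have "(\<lambda>n. X^(Suc (Suc n)) /\<^sub>R fact (Suc (Suc n))) sums (exp X - 1 - X)"
    using exp_converges[of X] by (subst sums_Suc_iff, subst sums_Suc_iff) simp
  moreover have "norm (X^(Suc (Suc n)) /\<^sub>R fact (Suc (Suc n))) \<le> (norm X)^2 * (norm X^n / fact n)" for n
  proof -
    have "norm (X^(Suc (Suc n)) /\<^sub>R fact (Suc (Suc n))) \<le> norm X^(Suc (Suc n)) / fact (Suc (Suc n))"
      by (rule norm_pow_fact)
    also have "\<dots> \<le> norm X^(Suc (Suc n)) / fact n"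
      by (rule divide_left_mono[OF fact_mono]) auto
    also have "\<dots> = (norm X)^2 * (norm X^n / fact n)" by (simp add: power2_eq_square)
    finally show ?thesis .
  qed
  ultimately show ?thesis by (rule norm_sums_le) simp
qed

lemma exp_split:
  fixes L :: "'a::{real_normed_algebra_1,banach}"
  shows "exp ((t + d) *\<^sub>R L) = exp (t *\<^sub>R L) * exp (d *\<^sub>R L)"
proof -
  have "(t *\<^sub>R L) * (d *\<^sub>R L) = (d *\<^sub>R L) * (t *\<^sub>R L)" by simp
  then have "exp (t *\<^sub>R L + d *\<^sub>R L) = exp (t *\<^sub>R L) * exp (d *\<^sub>R L)" by (rule exp_add_commuting)
  then show ?thesis by (simp only: scaleR_add_left)
qed

lemma exp_scaled_bound:
  fixes L :: "'a::{real_normed_algebra_1,banach}"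
  assumes "norm L \<le> m" "0 \<le> t" "t \<le> 1"
  shows "norm (exp (t *\<^sub>R L)) \<le> exp m"
proof -
  have "norm (exp (t *\<^sub>R L)) \<le> exp (norm (t *\<^sub>R L))" by (rule norm_exp)
  also have "norm (t *\<^sub>R L) \<le> m"
    using assms by (simp add: mult_le_one order_trans[OF mult_left_le_one_le[of "norm L" t]])
  then have "exp (norm (t *\<^sub>R L)) \<le> exp m" by simp
  finally show ?thesis .
qed

lemma E1:
  fixes L :: "'a::{real_normed_algebra_1,banach}"
  assumes L: "norm L \<le> m" and t: "0 \<le> t" "t \<le> 1" and d: "0 \<le> d" "d \<le> 1"
  shows "norm (exp ((t + d) *\<^sub>R L) - exp (t *\<^sub>R L)) \<le> exp m * (d * m * exp m)"
proof -
  have m0: "0 \<le> m" using L norm_ge_zero order_trans by blast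
  have nd: "norm (d *\<^sub>R L) \<le> d * m" using L d by (simp add: mult_left_mono)
  have ndm: "d * m \<le> m" using d m0 by (simp add: mult_left_le_one_le)
  have eq: "exp ((t + d) *\<^sub>R L) - exp (t *\<^sub>R L) = exp (t *\<^sub>R L) * (exp (d *\<^sub>R L) - 1)"
    unfolding exp_split by (simp add: right_diff_distrib)
  have b1: "norm (exp (t *\<^sub>R L)) \<le> exp m" using exp_scaled_bound[OF L t] .
  have "norm (exp (d *\<^sub>R L) - 1) \<le> norm (d *\<^sub>R L) * exp (norm (d *\<^sub>R L))"
    by (rule exp_minus_one_bound)
  also have "\<dots> \<le> (d * m) * exp m"
  proof (rule mult_mono[OF nd])
    show "exp (norm (d *\<^sub>R L)) \<le> exp m" using nd ndm by simp
  qed (use d m0 in auto)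
  finally have b2: "norm (exp (d *\<^sub>R L) - 1) \<le> d * m * exp m" .
  have "norm (exp ((t + d) *\<^sub>R L) - exp (t *\<^sub>R L))
      \<le> norm (exp (t *\<^sub>R L)) * norm (exp (d *\<^sub>R L) - 1)"
    unfolding eq by (rule norm_mult_ineq)
  also have "\<dots> \<le> exp m * (d * m * exp m)"
    by (rule mult_mono[OF b1 b2]) auto
  finally show ?thesis .
qed

lemma E2:
  fixes L :: "'a::{real_normed_algebra_1,banach}"
  assumes L: "norm L \<le> m" and t: "0 \<le> t" "t \<le> 1" and d: "0 \<le> d" "d \<le> 1"
  shows "norm (exp ((t + d) *\<^sub>R L) * L^j - exp (t *\<^sub>R L) * L^j - d *\<^sub>R (exp (t *\<^sub>R L) * L^(Suc j)))
     \<le> exp m * ((d * m)^2 * exp m) * m^j"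
proof -
  have m0: "0 \<le> m" using L norm_ge_zero order_trans by blast
  have nd: "norm (d *\<^sub>R L) \<le> d * m" using L d by (simp add: mult_left_mono)
  have ndm: "d * m \<le> m" using d m0 by (simp add: mult_left_le_one_le)
  have eq: "exp ((t + d) *\<^sub>R L) * L^j - exp (t *\<^sub>R L) * L^j - d *\<^sub>R (exp (t *\<^sub>R L) * L^(Suc j))
     = exp (t *\<^sub>R L) * ((exp (d *\<^sub>R L) - 1 - d *\<^sub>R L) * L^j)"
  proof -
    have "d *\<^sub>R (exp (t *\<^sub>R L) * L^(Suc j)) = exp (t *\<^sub>R L) * ((d *\<^sub>R L) * L^j)"
      by (simp add: power_Suc mult.assoc)
    then show ?thesis unfolding exp_split
      by (simp add: mult.assoc left_diff_distrib right_diff_distrib)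
  qed
  have b1: "norm (exp (t *\<^sub>R L)) \<le> exp m" using exp_scaled_bound[OF L t] .
  have "norm (exp (d *\<^sub>R L) - 1 - d *\<^sub>R L) \<le> (norm (d *\<^sub>R L))^2 * exp (norm (d *\<^sub>R L))"
    by (rule exp_minus_one_lin_bound)
  also have "\<dots> \<le> (d * m)^2 * exp m"
  proof (rule mult_mono)
    show "(norm (d *\<^sub>R L))^2 \<le> (d * m)^2" by (rule power_mono[OF nd]) simp
    show "exp (norm (d *\<^sub>R L)) \<le> exp m" using nd ndm by simp
  qed auto
  finally have b2: "norm (exp (d *\<^sub>R L) - 1 - d *\<^sub>R L) \<le> (d * m)^2 * exp m" .
  have b3: "norm (L^j) \<le> m^j"
    using norm_power_ineq[of L j] power_mono[OF L, of j] by simp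
  have "norm ((exp (d *\<^sub>R L) - 1 - d *\<^sub>R L) * L^j) \<le> (d * m)^2 * exp m * m^j"
    by (rule order_trans[OF norm_mult_ineq mult_mono[OF b2 b3]]) auto
  then have "norm (exp (t *\<^sub>R L) * ((exp (d *\<^sub>R L) - 1 - d *\<^sub>R L) * L^j))
     \<le> exp m * ((d * m)^2 * exp m * m^j)"
    by (rule order_trans[OF norm_mult_ineq mult_mono[OF b1]]) auto
  then show ?thesis unfolding eq by (simp add: mult.assoc)
qed

lemma exp_scaleR_continuous:
  fixes L :: "'a::{real_normed_algebra_1,banach}"
  shows "continuous_on S (\<lambda>t. exp (t *\<^sub>R L))"
  by (metis continuous_at_imp_continuous_on exp_scaleR_has_vector_derivative_right
       has_vector_derivative_continuous)

definition integrand :: "(real \<Rightarrow> complex^2^2) \<Rightarrow> (real \<Rightarrow> complex^1^2) \<Rightarrow> (real \<Rightarrow> complex^1) \<Rightarrow> real \<Rightarrow> real \<Rightarrow> complex^2" where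
  "integrand A B u \<theta> s = mat_exp ((1 - s) *\<^sub>R A \<theta>) *v (B \<theta> *v u s)"

definition good where
  "good A B P u \<longleftrightarrow> set_integrable lborel {0..1::real} u \<and> (\<forall>\<theta>\<in>P. set_integrable lborel {0..1} (integrand A B u \<theta>))"

definition reach where
  "reach A B u \<theta> = (LINT s:{0..1}|lborel. integrand A B u \<theta> s)"

definition inV :: "(real \<Rightarrow> complex^2^2) \<Rightarrow> (real \<Rightarrow> complex^1^2) \<Rightarrow> real set \<Rightarrow> (real \<Rightarrow> complex^2) \<Rightarrow> bool" where
  "inV A B P F \<longleftrightarrow> (\<forall>\<epsilon>>0. \<exists>u. good A B P u \<and> (\<forall>\<theta>\<in>P. norm (reach A B u \<theta> - F \<theta>) \<le> \<epsilon>))"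

lemma integrand_add: "integrand A B (\<lambda>s. u s + v s) \<theta> s = integrand A B u \<theta> s + integrand A B v \<theta> s"
  by (simp add: integrand_def matrix_vector_right_distrib)

lemma integrand_scale: "integrand A B (\<lambda>s. r *\<^sub>R u s) \<theta> s = r *\<^sub>R integrand A B u \<theta> s"
  by (simp add: integrand_def mv_scaleR)

lemma V_zero: "inV A B P (\<lambda>\<theta>. 0)"
proof -
  have z: "integrand A B (\<lambda>s. 0) \<theta> = (\<lambda>s. 0)" for \<theta>
    by (simp add: integrand_def fun_eq_iff)
  have "good A B P (\<lambda>s. 0)" unfolding good_def z by (simp add: set_integrable_def)
  moreover have "reach A B (\<lambda>s. 0) \<theta> = 0" for \<theta> unfolding reach_def z by (simp add: set_lebesgue_integral_def)
  ultimately show ?thesis unfolding inV_def by auto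
qed

lemma V_add:
  assumes "inV A B P F" "inV A B P G"
  shows "inV A B P (\<lambda>\<theta>. F \<theta> + G \<theta>)"
  unfolding inV_def
proof (intro allI impI)
  fix \<epsilon> :: real assume e: "\<epsilon> > 0"
  obtain u where u: "good A B P u" "\<forall>\<theta>\<in>P. norm (reach A B u \<theta> - F \<theta>) \<le> \<epsilon>/2"
    using assms(1) e unfolding inV_def by (meson half_gt_zero)
  obtain v where v: "good A B P v" "\<forall>\<theta>\<in>P. norm (reach A B v \<theta> - G \<theta>) \<le> \<epsilon>/2"
    using assms(2) e unfolding inV_def by (meson half_gt_zero)
  have ie: "integrand A B (\<lambda>s. u s + v s) \<theta> = (\<lambda>s. integrand A B u \<theta> s + integrand A B v \<theta> s)" for \<theta>
    by (simp add: fun_eq_iff integrand_add)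
  have g: "good A B P (\<lambda>s. u s + v s)"
    using u(1) v(1) unfolding good_def ie by auto
  moreover have "norm (reach A B (\<lambda>s. u s + v s) \<theta> - (F \<theta> + G \<theta>)) \<le> \<epsilon>" if "\<theta> \<in> P" for \<theta>
  proof -
    have "reach A B (\<lambda>s. u s + v s) \<theta> = reach A B u \<theta> + reach A B v \<theta>"
      using u(1) v(1) that unfolding reach_def ie good_def by (simp add: set_integral_add)
    then have "norm (reach A B (\<lambda>s. u s + v s) \<theta> - (F \<theta> + G \<theta>))
       = norm ((reach A B u \<theta> - F \<theta>) + (reach A B v \<theta> - G \<theta>))" by (simp add: algebra_simps)
    also have "\<dots> \<le> norm (reach A B u \<theta> - F \<theta>) + norm (reach A B v \<theta> - G \<theta>)"
      by (rule norm_triangle_ineq)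
    also have "\<dots> \<le> \<epsilon>/2 + \<epsilon>/2" using u(2) v(2) that by (intro add_mono) auto
    finally show ?thesis by simp
  qed
  ultimately show "\<exists>w. good A B P w \<and> (\<forall>\<theta>\<in>P. norm (reach A B w \<theta> - (F \<theta> + G \<theta>)) \<le> \<epsilon>)"
    by blast
qed

lemma V_scale:
  assumes "inV A B P F"
  shows "inV A B P (\<lambda>\<theta>. r *\<^sub>R F \<theta>)"
proof (cases "r = 0")
  case True then show ?thesis using V_zero by simp
next
  case False
  show ?thesis unfolding inV_def
  proof (intro allI impI)
    fix \<epsilon> :: real assume e: "\<epsilon> > 0"
    then have "\<epsilon> / \<bar>r\<bar> > 0" using False by simp
    then obtain u where u: "good A B P u" "\<forall>\<theta>\<in>P. norm (reach A B u \<theta> - F \<theta>) \<le> \<epsilon> / \<bar>r\<bar>"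
      using assms unfolding inV_def by blast
    have ie: "integrand A B (\<lambda>s. r *\<^sub>R u s) \<theta> = (\<lambda>s. r *\<^sub>R integrand A B u \<theta> s)" for \<theta>
      by (simp add: fun_eq_iff integrand_scale)
    have "good A B P (\<lambda>s. r *\<^sub>R u s)"
      using u(1) unfolding good_def ie by auto
    moreover have "norm (reach A B (\<lambda>s. r *\<^sub>R u s) \<theta> - r *\<^sub>R F \<theta>) \<le> \<epsilon>" if "\<theta> \<in> P" for \<theta>
    proof -
      have "reach A B (\<lambda>s. r *\<^sub>R u s) \<theta> = r *\<^sub>R reach A B u \<theta>"
        unfolding reach_def ie by simp
      then have "norm (reach A B (\<lambda>s. r *\<^sub>R u s) \<theta> - r *\<^sub>R F \<theta>) = \<bar>r\<bar> * norm (reach A B u \<theta> - F \<theta>)"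
        by (simp add: scaleR_diff_right[symmetric])
      also have "\<dots> \<le> \<bar>r\<bar> * (\<epsilon> / \<bar>r\<bar>)" using u(2) that by (intro mult_left_mono) auto
      also have "\<dots> = \<epsilon>" using False by simp
      finally show ?thesis .
    qed
    ultimately show "\<exists>w. good A B P w \<and> (\<forall>\<theta>\<in>P. norm (reach A B w \<theta> - r *\<^sub>R F \<theta>) \<le> \<epsilon>)"
      by blast
  qed
qed

lemma V_closed:
  assumes "\<And>\<epsilon>. \<epsilon> > 0 \<Longrightarrow> \<exists>F. inV A B P F \<and> (\<forall>\<theta>\<in>P. norm (F \<theta> - G \<theta>) \<le> \<epsilon>)"
  shows "inV A B P G"
  unfolding inV_def
proof (intro allI impI)
  fix \<epsilon> :: real assume e: "\<epsilon> > 0"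
  obtain F where F: "inV A B P F" "\<forall>\<theta>\<in>P. norm (F \<theta> - G \<theta>) \<le> \<epsilon>/2"
    using assms[of "\<epsilon>/2"] e by auto
  obtain u where u: "good A B P u" "\<forall>\<theta>\<in>P. norm (reach A B u \<theta> - F \<theta>) \<le> \<epsilon>/2"
    using F(1) e unfolding inV_def by (meson half_gt_zero)
  have "norm (reach A B u \<theta> - G \<theta>) \<le> \<epsilon>" if "\<theta> \<in> P" for \<theta>
  proof -
    have "norm (reach A B u \<theta> - G \<theta>) \<le> norm (reach A B u \<theta> - F \<theta>) + norm (F \<theta> - G \<theta>)"
      by (rule norm_diff_triangle_le[OF order_refl order_refl])
    also have "\<dots> \<le> \<epsilon>/2 + \<epsilon>/2" using u(2) F(2) that by (intro add_mono) auto
    finally show ?thesis by simp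
  qed
  then show "\<exists>u. good A B P u \<and> (\<forall>\<theta>\<in>P. norm (reach A B u \<theta> - G \<theta>) \<le> \<epsilon>)"
    using u(1) by blast
qed

lemma V_sum:
  fixes N :: nat
  assumes "\<And>n. n \<le> N \<Longrightarrow> inV A B P (F n)"
  shows "inV A B P (\<lambda>\<theta>. \<Sum>n\<le>N. F n \<theta>)"
  using assms
proof (induct N)
  case 0 then show ?case by simp
next
  case (Suc N)
  then show ?case by (simp add: V_add)
qed

lemma V_diff:
  assumes "inV A B P F" "inV A B P G"
  shows "inV A B P (\<lambda>\<theta>. F \<theta> - G \<theta>)"
  using V_add[OF assms(1) V_scale[OF assms(2), of "-1"]] by simp

definition psi :: "(real \<Rightarrow> complex^2^2) \<Rightarrow> (real \<Rightarrow> complex^1^2) \<Rightarrow> complex^1 \<Rightarrow> nat \<Rightarrow> real \<Rightarrow> real \<Rightarrow> complex^2" where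
  "psi A B v j \<tau> \<theta> = app (exp (\<tau> *\<^sub>R lin (A \<theta>)) * lin (A \<theta>) ^ j) (B \<theta> *v v)"

lemma mat_exp_scaled_app: "mat_exp (r *\<^sub>R M) *v x = app (exp (r *\<^sub>R lin M)) x"
proof -
  interpret L: bounded_linear lin by (rule bl_lin)
  show ?thesis by (simp add: mat_exp_app L.scaleR)
qed

lemma pulse_integral:
  fixes W :: "real \<Rightarrow> 'b::euclidean_space"
  assumes ab: "0 \<le> a" "b \<le> 1" and W: "continuous_on {a..b} W"
  shows "set_integrable lborel {0..1} (\<lambda>s. indicator {a..b} s *\<^sub>R W s)"
    "(LINT s:{0..1}|lborel. indicator {a..b} s *\<^sub>R W s) = integral {a..b} W"
proof -
  have eq: "(\<lambda>s. indicator {0..1} s *\<^sub>R (indicator {a..b} s *\<^sub>R W s)) = (\<lambda>s. indicator {a..b} s *\<^sub>R W s)"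
    using ab by (auto simp: fun_eq_iff indicator_def)
  have si: "set_integrable lborel {a..b} W" by (rule borel_integrable_atLeastAtMost'[OF W])
  then show "set_integrable lborel {0..1} (\<lambda>s. indicator {a..b} s *\<^sub>R W s)"
    unfolding set_integrable_def eq .
  have "(LINT s:{0..1}|lborel. indicator {a..b} s *\<^sub>R W s) = (LINT s:{a..b}|lborel. W s)"
    unfolding set_lebesgue_integral_def eq ..
  also have "\<dots> = integral {a..b} W" by (rule set_borel_integral_eq_integral(2)[OF si])
  finally show "(LINT s:{0..1}|lborel. indicator {a..b} s *\<^sub>R W s) = integral {a..b} W" .
qed

lemma cont_exp_app: "continuous_on S (\<lambda>s. app (exp ((1 - s) *\<^sub>R L)) w)"
proof -
  have "continuous_on S (\<lambda>s. exp ((1 - s) *\<^sub>R L))"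
    by (rule continuous_on_compose2[OF exp_scaleR_continuous[of UNIV L]]) (auto intro!: continuous_intros)
  then show ?thesis by (rule bounded_linear.continuous_on[OF bounded_linear_app])
qed

lemma V_pulse:
  assumes mb: "\<And>\<theta>. \<theta> \<in> P \<Longrightarrow> norm (lin (A \<theta>)) \<le> m" and m0: "0 \<le> m"
    and bb: "\<And>\<theta>. \<theta> \<in> P \<Longrightarrow> norm (B \<theta> *v v) \<le> \<beta>" and b0: "0 \<le> \<beta>"
    and \<tau>: "0 \<le> \<tau>" "\<tau> < 1"
  shows "inV A B P (psi A B v 0 \<tau>)"
  unfolding inV_def
proof (intro allI impI)
  fix \<epsilon> :: real assume e: "\<epsilon> > 0"
  define K where "K = exp m * m * exp m * \<beta> + 1"
  have K0: "K > 0" unfolding K_def using m0 b0 by (intro add_nonneg_pos mult_nonneg_nonneg) auto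
  define h where "h = min (1 - \<tau>) (\<epsilon> / K)"
  have h0: "0 < h" unfolding h_def using \<tau> e K0 by simp
  have h1: "h \<le> 1 - \<tau>" "h \<le> \<epsilon> / K" unfolding h_def by auto
  define a where "a = 1 - \<tau> - h"
  define b where "b = 1 - \<tau>"
  have ab: "0 \<le> a" "b \<le> 1" "a \<le> b" "b - a = h" unfolding a_def b_def using h1 \<tau> h0 by auto
  define u where "u = (\<lambda>s. indicator {a..b} s *\<^sub>R ((1/h) *\<^sub>R v))"
  define W where "W = (\<lambda>\<theta> s. (1/h) *\<^sub>R app (exp ((1 - s) *\<^sub>R lin (A \<theta>))) (B \<theta> *v v))"
  have ie: "integrand A B u \<theta> = (\<lambda>s. indicator {a..b} s *\<^sub>R W \<theta> s)" for \<theta>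
    by (simp add: fun_eq_iff integrand_def u_def W_def mv_scaleR mat_exp_scaled_app)
  have Wc: "continuous_on {a..b} (W \<theta>)" for \<theta>
    unfolding W_def by (intro continuous_intros cont_exp_app)
  have ui: "set_integrable lborel {0..1} u"
    unfolding u_def using pulse_integral(1)[OF ab(1,2), of "\<lambda>s. (1/h) *\<^sub>R v"] by simp
  have "good A B P u" unfolding good_def ie using ui pulse_integral(1)[OF ab(1,2) Wc] by simp
  moreover have "norm (reach A B u \<theta> - psi A B v 0 \<tau> \<theta>) \<le> \<epsilon>" if "\<theta> \<in> P" for \<theta>
  proof -
    let ?L = "lin (A \<theta>)"
    let ?T = "psi A B v 0 \<tau> \<theta>"
    have T: "?T = app (exp (\<tau> *\<^sub>R ?L)) (B \<theta> *v v)" by (simp add: psi_def)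
    have r: "reach A B u \<theta> = integral {a..b} (W \<theta>)"
      unfolding reach_def ie by (rule pulse_integral(2)[OF ab(1,2) Wc])
    have tc: "?T = integral {a..b} (\<lambda>s. (1/h) *\<^sub>R ?T)" using ab h0 by simp
    have "reach A B u \<theta> - ?T = integral {a..b} (\<lambda>s. W \<theta> s - (1/h) *\<^sub>R ?T)"
      unfolding r apply (subst tc)
      by (rule integral_diff[symmetric]) (auto intro!: integrable_continuous_interval Wc continuous_intros)
    also have "norm \<dots> \<le> ((1/h) * (exp m * (h * m * exp m) * \<beta>)) * (b - a)"
    proof (rule integral_bound[OF ab(3)])
      show "continuous_on {a..b} (\<lambda>s. W \<theta> s - (1/h) *\<^sub>R ?T)" by (intro continuous_intros Wc)
      fix s assume s: "s \<in> {a..b}"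
      define d where "d = 1 - s - \<tau>"
      have d: "0 \<le> d" "d \<le> h" "d \<le> 1" "1 - s = \<tau> + d" using s ab h1 \<tau> unfolding d_def a_def b_def by auto
      have "W \<theta> s - (1/h) *\<^sub>R ?T = (1/h) *\<^sub>R app (exp ((\<tau> + d) *\<^sub>R ?L) - exp (\<tau> *\<^sub>R ?L)) (B \<theta> *v v)"
        unfolding W_def T d(4) by (simp add: app_diff scaleR_diff_right)
      also have "norm \<dots> = (1/h) * norm (app (exp ((\<tau> + d) *\<^sub>R ?L) - exp (\<tau> *\<^sub>R ?L)) (B \<theta> *v v))"
        using h0 by simp
      also have "\<dots> \<le> (1/h) * (exp m * (h * m * exp m) * \<beta>)"
      proof (rule mult_left_mono)
        have "norm (app (exp ((\<tau> + d) *\<^sub>R ?L) - exp (\<tau> *\<^sub>R ?L)) (B \<theta> *v v))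
            \<le> norm (exp ((\<tau> + d) *\<^sub>R ?L) - exp (\<tau> *\<^sub>R ?L)) * norm (B \<theta> *v v)" by (rule app_norm)
        also have "\<dots> \<le> (exp m * (d * m * exp m)) * \<beta>"
          by (rule mult_mono[OF E1[OF mb[OF that] \<tau>(1) _ d(1) d(3)] bb[OF that]]) (use \<tau> d m0 in auto)
        also have "\<dots> \<le> exp m * (h * m * exp m) * \<beta>"
          using d m0 b0 by (intro mult_right_mono mult_left_mono) auto
        finally show "norm (app (exp ((\<tau> + d) *\<^sub>R ?L) - exp (\<tau> *\<^sub>R ?L)) (B \<theta> *v v))
            \<le> exp m * (h * m * exp m) * \<beta>" .
      qed (use h0 in simp)
      finally show "norm (W \<theta> s - (1/h) *\<^sub>R ?T) \<le> (1/h) * (exp m * (h * m * exp m) * \<beta>)" .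
    qed
    also have "\<dots> = h * (exp m * m * exp m * \<beta>)" using ab h0 by (simp add: field_simps)
    also have "\<dots> \<le> h * K" unfolding K_def using h0 by (intro mult_left_mono) auto
    also have "\<dots> \<le> \<epsilon>" using h1 K0 by (simp add: field_simps)
    finally show ?thesis .
  qed
  ultimately show "\<exists>u. good A B P u \<and> (\<forall>\<theta>\<in>P. norm (reach A B u \<theta> - psi A B v 0 \<tau> \<theta>) \<le> \<epsilon>)"
    by blast
qed

lemma V_deriv:
  assumes mb: "\<And>\<theta>. \<theta> \<in> P \<Longrightarrow> norm (lin (A \<theta>)) \<le> m" and m0: "0 \<le> m"
    and bb: "\<And>\<theta>. \<theta> \<in> P \<Longrightarrow> norm (B \<theta> *v v) \<le> \<beta>" and b0: "0 \<le> \<beta>"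
    and IH: "\<And>\<tau>. 0 \<le> \<tau> \<Longrightarrow> \<tau> < 1 \<Longrightarrow> inV A B P (psi A B v j \<tau>)"
    and \<tau>: "0 \<le> \<tau>" "\<tau> < 1"
  shows "inV A B P (psi A B v (Suc j) \<tau>)"
proof (rule V_closed)
  fix \<epsilon> :: real assume e: "\<epsilon> > 0"
  define K where "K = exp m * m^2 * exp m * m^j * \<beta> + 1"
  have K0: "K > 0" unfolding K_def using m0 b0 by (intro add_nonneg_pos mult_nonneg_nonneg) auto
  define d where "d = min ((1 - \<tau>)/2) (\<epsilon> / K)"
  have d0: "0 < d" unfolding d_def using \<tau> e K0 by simp
  have d1: "d \<le> (1 - \<tau>)/2" "d \<le> \<epsilon> / K" unfolding d_def by (rule min.cobounded1, rule min.cobounded2)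
  define F where "F = (\<lambda>\<theta>. (1/d) *\<^sub>R (psi A B v j (\<tau> + d) \<theta> - psi A B v j \<tau> \<theta>))"
  have i1: "inV A B P (psi A B v j (\<tau> + d))" by (rule IH) (use \<tau> d0 d1 in auto)
  have i2: "inV A B P (psi A B v j \<tau>)" by (rule IH[OF \<tau>])
  have "inV A B P F" unfolding F_def by (rule V_scale[OF V_diff[OF i1 i2]])
  moreover have "norm (F \<theta> - psi A B v (Suc j) \<tau> \<theta>) \<le> \<epsilon>" if "\<theta> \<in> P" for \<theta>
  proof -
    let ?L = "lin (A \<theta>)"
    let ?X = "exp ((\<tau> + d) *\<^sub>R ?L) * ?L^j - exp (\<tau> *\<^sub>R ?L) * ?L^j - d *\<^sub>R (exp (\<tau> *\<^sub>R ?L) * ?L^(Suc j))"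
    have "F \<theta> - psi A B v (Suc j) \<tau> \<theta> = (1/d) *\<^sub>R app ?X (B \<theta> *v v)"
      unfolding F_def psi_def app_diff app_scaleR scaleR_diff_right using d0 by simp
    also have "norm \<dots> = (1/d) * norm (app ?X (B \<theta> *v v))" using d0 by simp
    also have "\<dots> \<le> (1/d) * ((exp m * ((d * m)^2 * exp m) * m^j) * \<beta>)"
    proof (rule mult_left_mono)
      have "norm (app ?X (B \<theta> *v v)) \<le> norm ?X * norm (B \<theta> *v v)" by (rule app_norm)
      also have "\<dots> \<le> (exp m * ((d * m)^2 * exp m) * m^j) * \<beta>"
        by (rule mult_mono[OF E2[OF mb[OF that] \<tau>(1) _ _ _] bb[OF that]]) (use \<tau> d0 d1 m0 in auto)
      finally show "norm (app ?X (B \<theta> *v v)) \<le> (exp m * ((d * m)^2 * exp m) * m^j) * \<beta>" .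
    qed (use d0 in simp)
    also have "\<dots> = d * (exp m * m^2 * exp m * m^j * \<beta>)" using d0 by (simp add: power_mult_distrib power2_eq_square)
    also have "\<dots> \<le> d * K" unfolding K_def using d0 by (intro mult_left_mono) auto
    also have "\<dots> \<le> \<epsilon>" using d1 K0 by (simp add: field_simps)
    finally show ?thesis .
  qed
  ultimately show "\<exists>F. inV A B P F \<and> (\<forall>\<theta>\<in>P. norm (F \<theta> - psi A B v (Suc j) \<tau> \<theta>) \<le> \<epsilon>)"
    by blast
qed

lemma V_all:
  assumes mb: "\<And>\<theta>. \<theta> \<in> P \<Longrightarrow> norm (lin (A \<theta>)) \<le> m" and m0: "0 \<le> m"
    and bb: "\<And>\<theta>. \<theta> \<in> P \<Longrightarrow> norm (B \<theta> *v v) \<le> \<beta>" and b0: "0 \<le> \<beta>"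
  shows "inV A B P (\<lambda>\<theta>. mat_pow (A \<theta>) j *v (B \<theta> *v v))"
proof -
  have "\<forall>\<tau>. 0 \<le> \<tau> \<longrightarrow> \<tau> < 1 \<longrightarrow> inV A B P (psi A B v j \<tau>)"
  proof (induct j)
    case 0 show ?case by (intro allI impI V_pulse[OF mb m0 bb b0])
  next
    case (Suc j)
    show ?case
    proof (intro allI impI)
      fix \<tau> :: real assume "0 \<le> \<tau>" "\<tau> < 1"
      then show "inV A B P (psi A B v (Suc j) \<tau>)"
        by (intro V_deriv[OF mb m0 bb b0]) (use Suc in auto)
    qed
  qed
  then have "inV A B P (psi A B v j 0)" by simp
  moreover have pj: "psi A B v j 0 \<theta> = mat_pow (A \<theta>) j *v (B \<theta> *v v)" for \<theta>
  proof -
    have "psi A B v j 0 \<theta> = app (lin (A \<theta>)^j) (B \<theta> *v v)" by (simp add: psi_def)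
    also have "\<dots> = app (lin (mat_pow (A \<theta>) j)) (B \<theta> *v v)" by (simp only: lin_pow)
    also have "\<dots> = mat_pow (A \<theta>) j *v (B \<theta> *v v)" by (rule app_lin)
    finally show ?thesis .
  qed
  moreover have "psi A B v j 0 = (\<lambda>\<theta>. mat_pow (A \<theta>) j *v (B \<theta> *v v))"
    by (rule ext) (rule pj)
  ultimately show ?thesis by simp
qed

lemma vec2_eqI: "(x::'a^2) $ 1 = y $ 1 \<Longrightarrow> x $ 2 = y $ 2 \<Longrightarrow> x = y"
  by (simp add: vec_eq_iff forall_2)

lemma b_osc_mv: "b_osc g \<theta> *v v = vector [0, complex_of_real (g \<theta>) * v $ 1]"
  by (rule vec2_eqI) (simp_all add: b_osc_def matrix_vector_mult_def sum_1)

lemma A_osc_mv: "A_osc k g \<theta> *v vector [x, y] = vector [y, complex_of_real (k * g \<theta> - \<theta>^2) * x]"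
  by (rule vec2_eqI) (simp_all add: A_osc_def matrix_vector_mult_def sum_2)

lemma mat_pow_Suc_mv: "mat_pow M (Suc j) *v x = M *v (mat_pow M j *v x)"
  by (simp add: matrix_vector_mul_assoc)

lemma A_pow_mv:
  "mat_pow (A_osc k g \<theta>) (2*n) *v vector [0, w] = vector [0, complex_of_real (k * g \<theta> - \<theta>^2)^n * w]
   \<and> mat_pow (A_osc k g \<theta>) (2*n+1) *v vector [0, w] = vector [complex_of_real (k * g \<theta> - \<theta>^2)^n * w, 0]"
proof (induct n)
  case 0 show ?case by (simp add: A_osc_mv)
next
  case (Suc n)
  have e: "2 * Suc n = Suc (2 * n + 1)" by simp
  have 1: "mat_pow (A_osc k g \<theta>) (2 * Suc n) *v vector [0, w] = vector [0, complex_of_real (k * g \<theta> - \<theta>^2)^(Suc n) * w]"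
    unfolding e mat_pow_Suc_mv using Suc by (simp add: A_osc_mv mult.assoc)
  have 2: "mat_pow (A_osc k g \<theta>) (2 * Suc n + 1) *v vector [0, w] = vector [complex_of_real (k * g \<theta> - \<theta>^2)^(Suc n) * w, 0]"
    unfolding Suc_eq_plus1[symmetric] mat_pow_Suc_mv 1 by (simp add: A_osc_mv)
  show ?case using 1 2 by blast
qed

lemma norm_vec2: "norm (vector [x, y] :: 'a::real_normed_vector^2) \<le> norm x + norm y"
  using norm_le_l1_gen[of "vector [x, y] :: 'a^2"] by (simp add: sum_2)

lemma norm_A_osc: "norm (A_osc k g \<theta>) \<le> 1 + \<bar>k * g \<theta> - \<theta>^2\<bar>"
proof -
  have "norm (A_osc k g \<theta>) \<le> norm (vector [0, 1] :: complex^2) + norm (vector [complex_of_real (k * g \<theta> - \<theta>^2), 0] :: complex^2)"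
    unfolding A_osc_def by (rule norm_vec2)
  also have "\<dots> \<le> (norm (0::complex) + norm (1::complex)) + (norm (complex_of_real (k * g \<theta> - \<theta>^2)) + norm (0::complex))"
    by (intro add_mono norm_vec2)
  also have "\<dots> = 1 + \<bar>k * g \<theta> - \<theta>^2\<bar>" by (simp only: norm_of_real norm_zero norm_one add_0_left add_0_right)
  finally show ?thesis .
qed

lemma SW_c:
  fixes c \<phi> :: "real \<Rightarrow> real"
  assumes P: "compact P" and cc: "continuous_on P c" and ci: "inj_on c P"
    and \<phi>: "continuous_on P \<phi>" and e: "e > 0"
  shows "\<exists>p. \<forall>x\<in>P. \<bar>\<phi> x - poly p (c x)\<bar> < e"
proof -
  let ?Pr = "\<lambda>f. \<exists>p. f = (\<lambda>x. poly p (c x))"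
  have "\<exists>h. ?Pr h \<and> (\<forall>x\<in>P. \<bar>\<phi> x - h x\<bar> < e)"
  proof (rule Stone_Weierstrass_HOL[OF P _ _ _ _ _ \<phi> e])
    show "?Pr (\<lambda>x. a)" for a by (rule exI[of _ "[:a:]"]) simp
    show "continuous_on P f" if "?Pr f" for f
      using that cc by (auto intro!: continuous_intros)
    show "?Pr (\<lambda>x. f x + h x)" if fh: "?Pr f \<and> ?Pr h" for f h
    proof -
      obtain p q where "f = (\<lambda>x. poly p (c x))" "h = (\<lambda>x. poly q (c x))" using fh by blast
      then show ?thesis by (intro exI[of _ "p + q"]) simp
    qed
    show "?Pr (\<lambda>x. f x * h x)" if fh: "?Pr f \<and> ?Pr h" for f h
    proof -
      obtain p q where "f = (\<lambda>x. poly p (c x))" "h = (\<lambda>x. poly q (c x))" using fh by blast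
      then show ?thesis by (intro exI[of _ "p * q"]) simp
    qed
    show "\<exists>f. ?Pr f \<and> f x \<noteq> f y" if "x \<in> P \<and> y \<in> P \<and> x \<noteq> y" for x y
      using that ci by (intro exI[of _ c]) (auto simp: inj_on_def intro!: exI[of _ "[:0,1:]"])
  qed
  then show ?thesis by auto
qed

lemma vec_sum_1: "(\<Sum>n\<in>S. vector [a n, 0] :: 'a::comm_monoid_add^2) = vector [\<Sum>n\<in>S. a n, 0]"
  by (rule vec2_eqI) simp_all

lemma vec_sum_2: "(\<Sum>n\<in>S. vector [0, a n] :: 'a::comm_monoid_add^2) = vector [0, \<Sum>n\<in>S. a n]"
  by (rule vec2_eqI) simp_all

lemma sum_poly_c:
  "(\<Sum>n\<le>degree p. (complex_of_real x)^n * (w * complex_of_real (coeff p n))) = w * complex_of_real (poly p x)"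
  by (simp add: poly_altdef sum_distrib_left mult_ac)

lemma scalar_err:
  fixes G h :: complex
  assumes "\<bar>a1 - Re h\<bar> \<le> e" "\<bar>a2 - Im h\<bar> \<le> e"
  shows "cmod (G * 1 * complex_of_real a1 + G * \<i> * complex_of_real a2 - G * h) \<le> cmod G * (2 * e)"
proof -
  have "G * 1 * complex_of_real a1 + G * \<i> * complex_of_real a2 - G * h
      = G * (complex_of_real (a1 - Re h) + \<i> * complex_of_real (a2 - Im h))"
    by (subst (3) complex_eq) (simp add: algebra_simps)
  also have "cmod \<dots> \<le> cmod G * (\<bar>a1 - Re h\<bar> + \<bar>a2 - Im h\<bar>)"
    unfolding norm_mult
    by (intro mult_left_mono order_trans[OF norm_triangle_ineq])
       (auto simp: norm_mult simp del: of_real_diff)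
  also have "\<dots> \<le> cmod G * (2 * e)" using assms by (intro mult_left_mono) auto
  finally show ?thesis .
qed

theorem mainTheorem4:
  fixes \<theta>s :: real and g g' :: "real \<Rightarrow> real" and k :: real
  assumes "\<theta>s > 0"
    and "\<And>\<theta>. \<theta> \<in> {-\<theta>s..\<theta>s} \<Longrightarrow> (g has_real_derivative g' \<theta>) (at \<theta> within {-\<theta>s..\<theta>s})"
    and "continuous_on {-\<theta>s..\<theta>s} g'"
    and "\<And>\<theta>. \<theta> \<in> {-\<theta>s..\<theta>s} \<Longrightarrow> g \<theta> \<noteq> 0"
    and "\<And>\<theta>. \<theta> \<in> {-\<theta>s..\<theta>s} \<Longrightarrow> g' \<theta> \<noteq> 0"
    and "k > (SUP \<theta>\<in>{-\<theta>s..\<theta>s}. 2 * \<theta> / g' \<theta>)"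
  shows "uniformly_ensemble_reachable {-\<theta>s..\<theta>s} (A_osc k g) (b_osc g)"
proof -
  define P where "P = {-\<theta>s..\<theta>s}"
  define A where "A = A_osc k g"
  define B where "B = b_osc g"
  define c where "c = (\<lambda>\<theta>. k * g \<theta> - \<theta>^2)"
  define G where "G = (\<lambda>\<theta>. complex_of_real (g \<theta>))"
  define C where "C = (\<lambda>\<theta>. complex_of_real (c \<theta>))"
  have der: "\<theta> \<in> P \<Longrightarrow> (g has_real_derivative g' \<theta>) (at \<theta> within P)" for \<theta>
    using assms(2) unfolding P_def .
  have g0: "\<theta> \<in> P \<Longrightarrow> g \<theta> \<noteq> 0" for \<theta> using assms(4) unfolding P_def .
  have g'0: "\<theta> \<in> P \<Longrightarrow> g' \<theta> \<noteq> 0" for \<theta> using assms(5) unfolding P_def .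
  have Pc: "compact P" unfolding P_def by simp
  have gcont: "continuous_on P g" using der by (rule DERIV_continuous_on)
  have ccont: "continuous_on P c" unfolding c_def by (intro continuous_intros gcont)
  have cder: "(c has_real_derivative (k * g' \<theta> - 2 * \<theta>)) (at \<theta> within P)" if "\<theta> \<in> P" for \<theta>
    unfolding c_def using der[OF that] by (auto intro!: derivative_eq_intros)
  have c'ne: "k * g' \<theta> - 2 * \<theta> \<noteq> 0" if "\<theta> \<in> P" for \<theta>
  proof -
    have "continuous_on P (\<lambda>\<theta>. 2 * \<theta> / g' \<theta>)"
      using assms(3) g'0 unfolding P_def[symmetric] by (intro continuous_intros) auto
    then have "bdd_above ((\<lambda>\<theta>. 2 * \<theta> / g' \<theta>) ` P)"
      by (intro bounded_imp_bdd_above compact_imp_bounded compact_continuous_image Pc)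
    then have "2 * \<theta> / g' \<theta> \<le> (SUP \<theta>\<in>P. 2 * \<theta> / g' \<theta>)" by (rule cSUP_upper[OF that])
    then have lt: "2 * \<theta> / g' \<theta> < k" using assms(6) unfolding P_def by simp
    show ?thesis
    proof (cases "g' \<theta> > 0")
      case True then show ?thesis using lt by (simp add: pos_divide_less_eq)
    next
      case False then have "g' \<theta> < 0" using g'0[OF that] by simp
      then show ?thesis using lt by (simp add: neg_divide_less_eq)
    qed
  qed
  have cinj: "inj_on c P"
  proof -
    have *: False if xy: "x \<in> P" "y \<in> P" "x < y" "c x = c y" for x y
    proof -
      have "\<exists>z. x < z \<and> z < y \<and> (*) (k * g' z - 2 * z) = (\<lambda>v. 0)"
      proof (rule Rolle_deriv[OF xy(3,4)])
        show "continuous_on {x..y} c"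
          by (rule continuous_on_subset[OF ccont]) (use xy in \<open>auto simp: P_def\<close>)
        fix z assume z: "x < z" "z < y"
        then have zP: "z \<in> P" and "-\<theta>s < z" "z < \<theta>s" using xy unfolding P_def by auto
        then have "at z within P = at z" unfolding P_def by (intro at_within_Icc_at)
        then show "(c has_derivative (*) (k * g' z - 2 * z)) (at z)"
          using cder[OF zP] by (simp add: has_field_derivative_def)
      qed
      then obtain z where z: "x < z" "z < y" "(*) (k * g' z - 2 * z) = (\<lambda>v::real. 0)" by blast
      then have "k * g' z - 2 * z = 0" by (metis mult.right_neutral)
      moreover have "z \<in> P" using z xy unfolding P_def by auto
      ultimately show False using c'ne by blast
    qed
    show ?thesis unfolding inj_on_def
      by (metis * linorder_neqE_linordered_idom)
  qed
  obtain Gm where Gm: "Gm > 0" "\<And>\<theta>. \<theta> \<in> P \<Longrightarrow> \<bar>g \<theta>\<bar> \<le> Gm"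
    using compact_imp_bounded[OF compact_continuous_image[OF gcont Pc]] unfolding bounded_pos by auto
  obtain Cm where Cm: "Cm > 0" "\<And>\<theta>. \<theta> \<in> P \<Longrightarrow> \<bar>c \<theta>\<bar> \<le> Cm"
    using compact_imp_bounded[OF compact_continuous_image[OF ccont Pc]] unfolding bounded_pos by auto
  obtain Kl where Kl: "Kl > 0" "\<And>X. norm (lin X) \<le> norm X * Kl"
    using bounded_linear.pos_bounded[OF bl_lin] by blast
  define m where "m = (1 + Cm) * Kl"
  have m0: "0 \<le> m" unfolding m_def using Cm Kl by simp
  have mb: "norm (lin (A \<theta>)) \<le> m" if "\<theta> \<in> P" for \<theta>
  proof -
    have "norm (lin (A \<theta>)) \<le> norm (A \<theta>) * Kl" by (rule Kl(2))
    also have "\<dots> \<le> (1 + Cm) * Kl"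
      using norm_A_osc[of k g \<theta>] Cm(2)[OF that] Kl(1) unfolding A_def c_def
      by (intro mult_right_mono) auto
    finally show ?thesis unfolding m_def .
  qed
  have Bv: "B \<theta> *v vector [z] = vector [0, G \<theta> * z]" for \<theta> z
    by (simp add: B_def b_osc_mv G_def)
  have bb: "norm (B \<theta> *v vector [z]) \<le> Gm * norm z" if "\<theta> \<in> P" for \<theta> z
  proof -
    have "norm (B \<theta> *v vector [z]) \<le> norm (0::complex) + norm (G \<theta> * z)"
      unfolding Bv by (rule norm_vec2)
    also have "\<dots> \<le> Gm * norm z"
      using Gm(2)[OF that] by (simp add: G_def norm_mult mult_right_mono)
    finally show ?thesis .
  qed
  have Vj: "inV A B P (\<lambda>\<theta>. mat_pow (A \<theta>) j *v (B \<theta> *v vector [z]))" for j z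
    by (rule V_all[OF mb m0 bb]) (use Gm in auto)
  have Vodd: "inV A B P (\<lambda>\<theta>. vector [C \<theta> ^ n * (G \<theta> * z), 0])" for n z
  proof -
    have "(\<lambda>\<theta>. mat_pow (A \<theta>) (2*n+1) *v (B \<theta> *v vector [z])) = (\<lambda>\<theta>. vector [C \<theta> ^ n * (G \<theta> * z), 0] :: complex^2)"
      unfolding Bv A_def C_def c_def using A_pow_mv by blast
    then show ?thesis using Vj[of "2*n+1" z] by simp
  qed
  have Veven: "inV A B P (\<lambda>\<theta>. vector [0, C \<theta> ^ n * (G \<theta> * z)])" for n z
  proof -
    have "(\<lambda>\<theta>. mat_pow (A \<theta>) (2*n) *v (B \<theta> *v vector [z])) = (\<lambda>\<theta>. vector [0, C \<theta> ^ n * (G \<theta> * z)] :: complex^2)"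
      unfolding Bv A_def C_def c_def using A_pow_mv by blast
    then show ?thesis using Vj[of "2*n" z] by simp
  qed
  have Vodd_poly: "inV A B P (\<lambda>\<theta>. vector [G \<theta> * w * complex_of_real (poly p (c \<theta>)), 0])" for w p
  proof -
    have "inV A B P (\<lambda>\<theta>. \<Sum>n\<le>degree p. vector [C \<theta> ^ n * (G \<theta> * (w * complex_of_real (coeff p n))), 0])"
      by (rule V_sum) (rule Vodd)
    moreover have "(\<lambda>\<theta>. \<Sum>n\<le>degree p. vector [C \<theta> ^ n * (G \<theta> * (w * complex_of_real (coeff p n))), 0])
        = (\<lambda>\<theta>. vector [G \<theta> * w * complex_of_real (poly p (c \<theta>)), 0] :: complex^2)"
      unfolding C_def by (rule ext, rule vec2_eqI) (simp_all add: sum_poly_c[symmetric] mult.assoc)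
    ultimately show ?thesis by simp
  qed
  have Veven_poly: "inV A B P (\<lambda>\<theta>. vector [0, G \<theta> * w * complex_of_real (poly p (c \<theta>))])" for w p
  proof -
    have "inV A B P (\<lambda>\<theta>. \<Sum>n\<le>degree p. vector [0, C \<theta> ^ n * (G \<theta> * (w * complex_of_real (coeff p n)))])"
      by (rule V_sum) (rule Veven)
    moreover have "(\<lambda>\<theta>. \<Sum>n\<le>degree p. vector [0, C \<theta> ^ n * (G \<theta> * (w * complex_of_real (coeff p n)))])
        = (\<lambda>\<theta>. vector [0, G \<theta> * w * complex_of_real (poly p (c \<theta>))] :: complex^2)"
      unfolding C_def by (rule ext, rule vec2_eqI) (simp_all add: sum_poly_c[symmetric] mult.assoc)
    ultimately show ?thesis by simp
  qed
  show ?thesis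
    unfolding uniformly_ensemble_reachable_def P_def[symmetric] A_def[symmetric] B_def[symmetric]
  proof (intro allI impI)
    fix f :: "real \<Rightarrow> complex^2" and \<epsilon> :: real
    assume fc: "continuous_on P f" and e: "\<epsilon> > 0"
    have G0: "G \<theta> \<noteq> 0" if "\<theta> \<in> P" for \<theta> using g0[OF that] by (simp add: G_def)
    have Gc: "continuous_on P G" unfolding G_def by (intro continuous_intros gcont)
    have fV: "inV A B P f"
    proof (rule V_closed)
      fix \<eta> :: real assume \<eta>: "\<eta> > 0"
      define \<eta>' where "\<eta>' = \<eta> / (4 * Gm)"
      have \<eta>'0: "\<eta>' > 0" using \<eta> Gm by (simp add: \<eta>'_def)
      define h1 where "h1 = (\<lambda>\<theta>. f \<theta> $ 1 / G \<theta>)"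
      define h2 where "h2 = (\<lambda>\<theta>. f \<theta> $ 2 / G \<theta>)"
      have h1c: "continuous_on P h1" unfolding h1_def using fc Gc G0 by (intro continuous_intros) auto
      have h2c: "continuous_on P h2" unfolding h2_def using fc Gc G0 by (intro continuous_intros) auto
      obtain p1 where p1: "\<forall>\<theta>\<in>P. \<bar>Re (h1 \<theta>) - poly p1 (c \<theta>)\<bar> < \<eta>'"
        using SW_c[OF Pc ccont cinj _ \<eta>'0, of "\<lambda>\<theta>. Re (h1 \<theta>)"] h1c by (auto intro: continuous_intros)
      obtain p2 where p2: "\<forall>\<theta>\<in>P. \<bar>Im (h1 \<theta>) - poly p2 (c \<theta>)\<bar> < \<eta>'"
        using SW_c[OF Pc ccont cinj _ \<eta>'0, of "\<lambda>\<theta>. Im (h1 \<theta>)"] h1c by (auto intro: continuous_intros)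
      obtain q1 where q1: "\<forall>\<theta>\<in>P. \<bar>Re (h2 \<theta>) - poly q1 (c \<theta>)\<bar> < \<eta>'"
        using SW_c[OF Pc ccont cinj _ \<eta>'0, of "\<lambda>\<theta>. Re (h2 \<theta>)"] h2c by (auto intro: continuous_intros)
      obtain q2 where q2: "\<forall>\<theta>\<in>P. \<bar>Im (h2 \<theta>) - poly q2 (c \<theta>)\<bar> < \<eta>'"
        using SW_c[OF Pc ccont cinj _ \<eta>'0, of "\<lambda>\<theta>. Im (h2 \<theta>)"] h2c by (auto intro: continuous_intros)
      define F where "F = (\<lambda>\<theta>. (vector [G \<theta> * 1 * complex_of_real (poly p1 (c \<theta>)), 0]
          + vector [G \<theta> * \<i> * complex_of_real (poly p2 (c \<theta>)), 0])
          + (vector [0, G \<theta> * 1 * complex_of_real (poly q1 (c \<theta>))]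
          + vector [0, G \<theta> * \<i> * complex_of_real (poly q2 (c \<theta>))]) :: complex^2)"
      have "inV A B P F" unfolding F_def
        by (rule V_add[OF V_add[OF Vodd_poly Vodd_poly] V_add[OF Veven_poly Veven_poly]])
      moreover have "norm (F \<theta> - f \<theta>) \<le> \<eta>" if "\<theta> \<in> P" for \<theta>
      proof -
        have GG: "cmod (G \<theta>) \<le> Gm" using Gm(2)[OF that] by (simp add: G_def)
        have c1: "cmod ((F \<theta> - f \<theta>) $ 1) \<le> cmod (G \<theta>) * (2 * \<eta>')"
        proof -
          have "(F \<theta> - f \<theta>) $ 1 = G \<theta> * 1 * complex_of_real (poly p1 (c \<theta>))
              + G \<theta> * \<i> * complex_of_real (poly p2 (c \<theta>)) - G \<theta> * h1 \<theta>"
            using G0[OF that] by (simp add: F_def h1_def)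
          also have "cmod \<dots> \<le> cmod (G \<theta>) * (2 * \<eta>')"
            by (rule scalar_err) (use p1 p2 that in \<open>auto simp: abs_minus_commute less_imp_le\<close>)
          finally show ?thesis .
        qed
        have c2: "cmod ((F \<theta> - f \<theta>) $ 2) \<le> cmod (G \<theta>) * (2 * \<eta>')"
        proof -
          have "(F \<theta> - f \<theta>) $ 2 = G \<theta> * 1 * complex_of_real (poly q1 (c \<theta>))
              + G \<theta> * \<i> * complex_of_real (poly q2 (c \<theta>)) - G \<theta> * h2 \<theta>"
            using G0[OF that] by (simp add: F_def h2_def)
          also have "cmod \<dots> \<le> cmod (G \<theta>) * (2 * \<eta>')"
            by (rule scalar_err) (use q1 q2 that in \<open>auto simp: abs_minus_commute less_imp_le\<close>)
          finally show ?thesis .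
        qed
        have "norm (F \<theta> - f \<theta>) \<le> cmod ((F \<theta> - f \<theta>) $ 1) + cmod ((F \<theta> - f \<theta>) $ 2)"
          using norm_le_l1_gen[of "F \<theta> - f \<theta>"] by (simp add: sum_2)
        also have "\<dots> \<le> Gm * (2 * \<eta>') + Gm * (2 * \<eta>')"
          using c1 c2 GG \<eta>'0 by (smt (verit) mult_right_mono)
        also have "\<dots> = \<eta>" unfolding \<eta>'_def using Gm by simp
        finally show ?thesis .
      qed
      ultimately show "\<exists>F. inV A B P F \<and> (\<forall>\<theta>\<in>P. norm (F \<theta> - f \<theta>) \<le> \<eta>)" by blast
    qed
    obtain u where u: "good A B P u" "\<forall>\<theta>\<in>P. norm (reach A B u \<theta> - f \<theta>) \<le> \<epsilon>/2"
      using fV e unfolding inV_def by (meson half_gt_zero)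
    show "\<exists>T>0. \<exists>u. set_integrable lborel {0..T} u \<and>
        (\<exists>\<delta><\<epsilon>. \<forall>\<theta>\<in>P. norm ((LINT s:{0..T}|lborel. mat_exp ((T - s) *\<^sub>R A \<theta>) *v (B \<theta> *v u s)) - f \<theta>) \<le> \<delta>)"
      using u e unfolding good_def reach_def integrand_def
      by (intro exI[of _ 1] conjI exI[of _ u] exI[of _ "\<epsilon>/2"]) auto
  qed
qed

end
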